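(* In the setting of the context, consider a Case 3 spacetime ($\partial_v r_-<0$). Radially outgoing null geodesics initially located between the inner and outer AHs, or on the inner AH, never intersect the inner AH at any later time.
   Context: Spherically symmetric spacetime $ds^2=-f(v,r)A(v,r)^2dv^2+2A(v,r)\,dr\,dv+r^2d\Omega^2$ with $A>0$, $f,A\to1$ as $r\to\infty$, $f(v,0)=1$, $\partial_rf(v,0)=\partial_rA(v,0)=0$; $f(v,\cdot)$ has exactly two zeros $r_+(v)>r_-(v)$ (outer/inner apparent horizons, AHs), $f=F(r-r_+)(r-r_-)$ with $F>0$, and $h=AF>0$. Assumptions: $\partial_v r_+<0$; $r_\pm(v)\to r_c$ as $v\to\infty$; the sign of $\partial_v r_-$ is constant; the $v\to\infty$ limits of $A,F,h$ behave as analytic functions of $r$, so all $\partial_r^n h$ converge as $v\to\infty$. With $x=r-r_c$, $x_\pm=r_\pm-r_c$ and $h$ regarded as a function of $(v,x)$, radially outgoing null geodesics solve $dx/dv=\tfrac12h(v,x)(x-x_+(v))(x-x_-(v))$. *)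

theory Defs
  imports "HOL-Analysis.Analysis"
begin

end

theory Submission
  imports Defs
begin

theorem lemma6:
  fixes h :: "real \<Rightarrow> real \<Rightarrow> real"
    and xp xm xp' xm' :: "real \<Rightarrow> real"
    and x :: "real \<Rightarrow> real" and I :: "real set" and v0 :: real
  assumes h_pos: "\<And>v y. h v y > 0"
    and h_cont: "continuous_on UNIV (\<lambda>(v, y). h v y)"
    and xp_deriv: "\<And>v. (xp has_real_derivative xp' v) (at v)"
    and xm_deriv: "\<And>v. (xm has_real_derivative xm' v) (at v)"
    and order: "\<And>v. xm v < xp v"
    and outer_shrinks: "\<And>v. xp' v < 0"
    and case3: "\<And>v. xm' v < 0"
    and xp_lim: "(xp \<longlongrightarrow> 0) at_top"
    and xm_lim: "(xm \<longlongrightarrow> 0) at_top"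
    and I_int: "is_interval I" and v0_in: "v0 \<in> I"
    and geodesic: "\<And>v. v \<in> I \<Longrightarrow>
        (x has_real_derivative (1/2) * h v (x v) * (x v - xp v) * (x v - xm v)) (at v within I)"
    and init: "xm v0 \<le> x v0" "x v0 < xp v0"
  shows "\<forall>v\<in>I. v > v0 \<longrightarrow> x v \<noteq> xm v"
proof (intro ballI impI notI)
  fix v1 assume v1I: "v1 \<in> I" and v01: "v0 < v1" and eq1: "x v1 = xm v1"
  define g where "g = (\<lambda>v. x v - xm v)"
  have sub: "{v0..v1} \<subseteq> I"
  proof
    fix t assume "t \<in> {v0..v1}"
    then have "v0 \<le> t" "t \<le> v1" by auto
    then show "t \<in> I" using I_int v0_in v1I unfolding is_interval_1 by blast
  qed
  have gder: "(g has_real_derivative (- xm' t)) (at t within I)" if "t \<in> I" "g t = 0" for t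
  proof -
    have "(g has_real_derivative ((1/2) * h t (x t) * (x t - xp t) * (x t - xm t) - xm' t)) (at t within I)"
      unfolding g_def
      by (rule DERIV_diff[OF geodesic[OF that(1)] has_field_derivative_at_within[OF xm_deriv]])
    moreover have "x t - xm t = 0" using that(2) by (simp add: g_def)
    ultimately show ?thesis by simp
  qed
  have contI: "continuous_on I g"
  proof -
    have "continuous_on I x"
      unfolding continuous_on_eq_continuous_within
      by (intro ballI DERIV_continuous[OF geodesic])
    moreover have "continuous_on I xm"
      by (intro continuous_at_imp_continuous_on ballI DERIV_isCont[OF xm_deriv])
    ultimately show ?thesis unfolding g_def by (intro continuous_on_diff)
  qed
  have g1: "g v1 = 0" using eq1 by (simp add: g_def)
  have g0: "g v0 \<ge> 0" using init by (simp add: g_def)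
  obtain d where d: "d > 0" "\<And>e. e > 0 \<Longrightarrow> v1 - e \<in> I \<Longrightarrow> e < d \<Longrightarrow> g (v1 - e) < g v1"
    proof -
    have "0 < - xm' v1" using case3[of v1] by simp
    from has_real_derivative_pos_inc_left[OF gder[OF v1I g1] this] show ?thesis
      using that by blast
  qed
  define s where "s = v1 - min (d/2) ((v1 - v0)/2)"
  have s1: "v0 < s" "s < v1" using d(1) v01 unfolding s_def by (auto simp: min_def field_simps)
  have gs: "g s < 0"
  proof -
    define e0 where "e0 = min (d/2) ((v1 - v0)/2)"
    have e0: "e0 > 0" "e0 < d" using d(1) v01 by (auto simp: e0_def min_def field_simps)
    have "s = v1 - e0" by (simp add: s_def e0_def)
    then have "v1 - e0 \<in> I" using sub s1 by auto
    from d(2)[OF e0(1) this e0(2)] show ?thesis using g1 \<open>s = v1 - e0\<close> by simp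
  qed
  define Z where "Z = {t \<in> {v0..s}. g t = 0}"
  have contS: "continuous_on {v0..s} g"
    by (rule continuous_on_subset[OF contI]) (use sub s1 in auto)
  have Zne: "Z \<noteq> {}"
  proof -
    obtain t where "t \<ge> v0" "t \<le> s" "g t = 0"
      using IVT2'[of g s 0 v0, OF _ g0] gs s1 contS by force
    then show ?thesis by (auto simp: Z_def)
  qed
  have Zcl: "closed Z"
    unfolding Z_def by (rule continuous_closed_preimage_constant[OF contS]) simp
  have Zbdd: "bdd_above Z" by (auto simp: Z_def bdd_above_def)
  define z where "z = Sup Z"
  have zZ: "z \<in> Z" unfolding z_def using closed_contains_Sup[OF Zne Zbdd Zcl] .
  have zmax: "\<And>t. t \<in> Z \<Longrightarrow> t \<le> z" unfolding z_def using Zbdd by (auto intro: cSup_upper)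
  have zI: "z \<in> I" and gz: "g z = 0" and zs: "z \<le> s" and z0: "v0 \<le> z"
    using zZ sub s1 by (auto simp: Z_def)
  have zs': "z < s" using zs gz gs by (cases "z = s") auto
  obtain e where e: "e > 0" "\<And>k. k > 0 \<Longrightarrow> z + k \<in> I \<Longrightarrow> k < e \<Longrightarrow> g z < g (z + k)"
    proof -
    have "0 < - xm' z" using case3[of z] by simp
    from has_real_derivative_pos_inc_right[OF gder[OF zI gz] this] show ?thesis
      using that by blast
  qed
  define z' where "z' = z + min (e/2) ((s - z)/2)"
  have z'1: "z < z'" "z' < s" using e(1) zs' unfolding z'_def by (auto simp: min_def field_simps)
  have gz': "g z' > 0"
  proof -
    define e0 where "e0 = min (e/2) ((s - z)/2)"
    have e0: "e0 > 0" "e0 < e" using e(1) zs' by (auto simp: e0_def min_def field_simps)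
    have "z' = z + e0" by (simp add: z'_def e0_def)
    then have "z + e0 \<in> I" using sub s1 z'1 z0 by auto
    from e(2)[OF e0(1) this e0(2)] show ?thesis using gz \<open>z' = z + e0\<close> by simp
  qed
  have contS': "continuous_on {z'..s} g"
    by (rule continuous_on_subset[OF contS]) (use z'1 z0 in auto)
  obtain t where t: "t \<ge> z'" "t \<le> s" "g t = 0"
    using IVT2'[of g s 0 z', OF _ _ _ contS'] gs gz' z'1 by force
  then have "t \<in> Z" using z'1 z0 by (auto simp: Z_def)
  then show False using zmax[of t] t z'1 by simp
qed

end
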